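(* In the PSP-PPP with half-length density $f_H$ ($0<\mathbb{E}[H]<\infty$), the Laplace transform $\mathcal{L}_{I_o^m}(s)=\mathbb{E}[e^{-sI_o^m}]$ of the interference from the vehicles on the stick(s) passing through the typical vehicle of order $m\in\{2,4\}$ is $$\mathcal{L}_{I_o^m}(s)=\Bigl(\int_0^\infty\Bigl(\frac1{2h}\int_{-h}^h\exp\Bigl(-\lambda p s^{\delta/2}\int_{(-w-h)s^{-\delta/2}}^{(-w+h)s^{-\delta/2}}\frac{\mathrm{d}v}{1+|v|^{2/\delta}}\Bigr)\mathrm{d}w\Bigr)\tilde f_H(h)\,\mathrm{d}h\Bigr)^{m/2},$$ where $\tilde f_H(h)=hf_H(h)/\mathbb{E}[H]$.
   Context: PSP: sticks $S(y,\varphi,h)=[y-hu(\varphi),y+hu(\varphi)]$, $u(\varphi)=(\cos\varphi,\sin\varphi)$, with midpoints a homogeneous PPP of intensity $\mu$ in $\mathbb{R}^2$, i.i.d. uniform orientations on $[0,\pi)$, i.i.d. half-lengths with density $f_H$, all independent. PSP-PPP: conditionally on the sticks, vehicles form independent homogeneous 1D PPPs of intensity $\lambda$ on each stick. Typical vehicle of order $m\in\{2,4\}$: a vehicle at the origin $o$ lying on $m/2$ sticks through $o$; these sticks are independent, each with half-length of density $\tilde f_H$ and with the origin at signed distance $W\sim\mathrm{Unif}(-H,H)$ from the stick's midpoint (given half-length $H$); the rest is an independent copy of the stationary PSP-PPP. Each vehicle $z\neq o$ is active independently with probability $p$ ($B_z$ i.i.d. Bernoulli$(p)$), fading gains $g_z$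 i.i.d. exponential with mean 1, path-loss exponent $\alpha>2$, $\delta=2/\alpha$. $I_o^m=\sum_{z\in\mathcal{V}_o^m}g_z\|z\|^{-\alpha}B_z$, where $\mathcal{V}_o^m$ is the set of vehicles (other than the one at $o$) on the sticks through $o$. *)

theory Defs
  imports "HOL-Probability.Probability"
begin

definition udir :: "real \<Rightarrow> real \<times> real" where
  "udir \<phi> = (cos \<phi>, sin \<phi>)"

definition poisson_measure :: "real \<Rightarrow> nat measure" where
  "poisson_measure r =
     density (count_space UNIV) (\<lambda>k. ennreal ((max 0 r) ^ k / fact k * exp (- max 0 r)))"

definition mean_half_length :: "(real \<Rightarrow> real) \<Rightarrow> real" where
  "mean_half_length fH = (\<integral>h. h * fH h \<partial>lborel)"

definition tilde_fH :: "(real \<Rightarrow> real) \<Rightarrow> real \<Rightarrow> real" where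
  "tilde_fH fH h = h * fH h / mean_half_length fH"

text \<open>Marks of a vehicle on a stick of half-length h: its position t along the stick
  (measured from the midpoint, uniform on [-h,h]), its activity indicator B (Bernoulli p)
  and its fading gain g (exponential with mean 1), all independent.\<close>
definition mark_space :: "(real \<times> bool \<times> real) measure" where
  "mark_space = borel \<Otimes>\<^sub>M (count_space UNIV \<Otimes>\<^sub>M borel)"

definition mark_law :: "real \<Rightarrow> real \<Rightarrow> (real \<times> bool \<times> real) measure" where
  "mark_law p h = uniform_measure lborel {-h..h} \<Otimes>\<^sub>M
      (measure_pmf (bernoulli_pmf p) \<Otimes>\<^sub>M density lborel (\<lambda>x. ennreal (exponential_density 1 x)))"

text \<open>Sample space of one stick through the origin: (half-length h, offset w of the origin
  from the midpoint, orientation phi, number n of vehicles, i.i.d. marks of the vehicles;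
  only the first n entries of the stream are used).\<close>
definition stick_space :: "(real \<times> real \<times> real \<times> nat \<times> (real \<times> bool \<times> real) stream) measure" where
  "stick_space = borel \<Otimes>\<^sub>M (borel \<Otimes>\<^sub>M (borel \<Otimes>\<^sub>M (count_space UNIV \<Otimes>\<^sub>M stream_space mark_space)))"

text \<open>Law of a stick through the typical vehicle: half-length with density tilde_fH,
  offset W ~ Unif(-H,H) given H, orientation uniform on [0,pi), and conditionally on these
  the (Palm) vehicles other than o form a PPP of intensity lam on the stick, realised as
  N ~ Poisson(2 h lam) i.i.d. uniformly placed, independently marked points.\<close>
definition typical_stick_law ::
    "real \<Rightarrow> real \<Rightarrow> (real \<Rightarrow> real) \<Rightarrow> (real \<times> real \<times> real \<times> nat \<times> (real \<times> bool \<times> real) stream) measure" where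
  "typical_stick_law lam p fH =
     restrict_space (density lborel (\<lambda>h. ennreal (tilde_fH fH h))) {0<..} \<bind> (\<lambda>h.
     uniform_measure lborel {-h..h} \<bind> (\<lambda>w.
     uniform_measure lborel {0..<pi} \<bind> (\<lambda>\<phi>.
     poisson_measure (2 * h * lam) \<bind> (\<lambda>n.
     stream_space (mark_law p h) \<bind> (\<lambda>xs.
     return stick_space (h, w, \<phi>, n, xs))))))"

text \<open>Position of the vehicle with along-stick coordinate t on the stick with midpoint
  y = - w u(phi) (so that the origin o = y + w u(phi) lies on the stick).\<close>
definition vehicle_pos :: "real \<Rightarrow> real \<Rightarrow> real \<Rightarrow> real \<times> real" where
  "vehicle_pos w \<phi> t = (t - w) *\<^sub>R udir \<phi>"

definition stick_interference ::
    "real \<Rightarrow> real \<times> real \<times> real \<times> nat \<times> (real \<times> bool \<times> real) stream \<Rightarrow> real" where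
  "stick_interference \<alpha> \<omega> =
     (case \<omega> of (h, w, \<phi>, n, xs) \<Rightarrow>
        (\<Sum>i<n. case xs !! i of (t, b, g) \<Rightarrow>
            g * norm (vehicle_pos w \<phi> t) powr (- \<alpha>) * (if b then 1 else 0)))"

text \<open>Typical vehicle of order m: m div 2 independent sticks through o.
  The interference I_o^m and its Laplace transform E[exp(-s I_o^m)].\<close>
definition typical_config_law :: "nat \<Rightarrow> real \<Rightarrow> real \<Rightarrow> (real \<Rightarrow> real) \<Rightarrow>
    (nat \<Rightarrow> real \<times> real \<times> real \<times> nat \<times> (real \<times> bool \<times> real) stream) measure" where
  "typical_config_law m lam p fH = PiM {..<m div 2} (\<lambda>_. typical_stick_law lam p fH)"

definition interference_o :: "nat \<Rightarrow> real \<Rightarrow>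
    (nat \<Rightarrow> real \<times> real \<times> real \<times> nat \<times> (real \<times> bool \<times> real) stream) \<Rightarrow> real" where
  "interference_o m \<alpha> \<omega> = (\<Sum>k<m div 2. stick_interference \<alpha> (\<omega> k))"

definition laplace_interference :: "nat \<Rightarrow> real \<Rightarrow> real \<Rightarrow> (real \<Rightarrow> real) \<Rightarrow> real \<Rightarrow> real \<Rightarrow> real" where
  "laplace_interference m lam p fH \<alpha> s =
     (\<integral>\<omega>. exp (- s * interference_o m \<alpha> \<omega>) \<partial>typical_config_law m lam p fH)"

end

theory Submission
  imports Defs
begin
lemma PiM_UNIV_distr:
  fixes M :: "'a measure" and N :: "'b measure"
  assumes M: "prob_space M" and f[measurable]: "f \<in> M \<rightarrow>\<^sub>M N"
  shows "PiM (UNIV::nat set) (\<lambda>_. distr M N f) =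
         distr (PiM UNIV (\<lambda>_. M)) (PiM UNIV (\<lambda>_. N)) (\<lambda>x i. f (x i))"
proof (rule measure_eqI_PiM_infinite[OF refl])
  interpret M: prob_space M by fact
  interpret P: product_prob_space "\<lambda>_::nat. M" UNIV ..
  interpret D: product_prob_space "\<lambda>_::nat. distr M N f" UNIV
    by (rule product_prob_spaceI, rule M.prob_space_distr[OF f])
  show "sets (distr (PiM UNIV (\<lambda>_. M)) (PiM UNIV (\<lambda>_. N)) (\<lambda>x i. f (x i))) = sets (PiM UNIV (\<lambda>_. distr M N f))"
    by (subst sets_distr, rule sets_PiM_cong) simp_all
  show "finite_measure (PiM (UNIV::nat set) (\<lambda>_. distr M N f))"
    by (rule D.P.finite_measure_axioms)
  fix A J assume J: "finite (J::nat set)" "J \<subseteq> UNIV" and A: "\<And>i. i \<in> J \<Longrightarrow> A i \<in> sets (distr M N f)"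
  have Am[measurable]: "i \<in> J \<Longrightarrow> A i \<in> sets N" for i using A by simp
  have meas: "(\<lambda>x i. f (x i)) \<in> PiM (UNIV::nat set) (\<lambda>_. M) \<rightarrow>\<^sub>M PiM UNIV (\<lambda>_. N)"
  proof (rule measurable_PiM_single')
    fix i :: nat assume "i \<in> UNIV"
    show "(\<lambda>x. f (x i)) \<in> PiM UNIV (\<lambda>_. M) \<rightarrow>\<^sub>M N"
      by measurable
  next
    show "(\<lambda>x i. f (x i)) \<in> space (PiM UNIV (\<lambda>_. M)) \<rightarrow> (\<Pi>\<^sub>E i\<in>UNIV. space N)"
      using measurable_space[OF f] by (auto simp: space_PiM)
  qed
  have "emeasure (PiM UNIV (\<lambda>_. distr M N f)) (prod_emb UNIV (\<lambda>_. distr M N f) J (Pi\<^sub>E J A))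
      = (\<Prod>j\<in>J. emeasure (distr M N f) (A j))"
    using J A by (intro D.emeasure_PiM_emb) auto
  also have "\<dots> = (\<Prod>j\<in>J. emeasure M (f -` A j \<inter> space M))"
    by (rule prod.cong[OF refl], rule emeasure_distr[OF f Am])
  also have "\<dots> = emeasure (PiM UNIV (\<lambda>_. M)) (prod_emb UNIV (\<lambda>_. M) J (Pi\<^sub>E J (\<lambda>j. f -` A j \<inter> space M)))"
    using J Am by (intro P.emeasure_PiM_emb[symmetric]) auto
  also have "prod_emb UNIV (\<lambda>_. M) J (Pi\<^sub>E J (\<lambda>j. f -` A j \<inter> space M)) =
      (\<lambda>x i. f (x i)) -` prod_emb UNIV (\<lambda>_. distr M N f) J (Pi\<^sub>E J A) \<inter> space (PiM UNIV (\<lambda>_. M))"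
    using Am[THEN sets.sets_into_space] measurable_space[OF f]
    by (auto simp: prod_emb_def space_PiM PiE_iff)
  also have "emeasure (PiM UNIV (\<lambda>_. M)) \<dots> = emeasure (distr (PiM UNIV (\<lambda>_. M)) (PiM UNIV (\<lambda>_. N)) (\<lambda>x i. f (x i)))
        (prod_emb UNIV (\<lambda>_. distr M N f) J (Pi\<^sub>E J A))"
  proof (rule emeasure_distr[symmetric, OF meas])
    have "prod_emb UNIV (\<lambda>_. distr M N f) J (Pi\<^sub>E J A) \<in> sets (PiM UNIV (\<lambda>_. distr M N f))"
      using J A by (intro sets_PiM_I) auto
    then show "prod_emb UNIV (\<lambda>_. distr M N f) J (Pi\<^sub>E J A) \<in> sets (PiM UNIV (\<lambda>_. N))"
      by (subst sets_PiM_cong[of UNIV UNIV "\<lambda>_. N" "\<lambda>_. distr M N f"]) simp_all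
  qed
  finally show "emeasure (PiM UNIV (\<lambda>_. distr M N f)) (prod_emb UNIV (\<lambda>_. distr M N f) J (Pi\<^sub>E J A)) =
     emeasure (distr (PiM UNIV (\<lambda>_. M)) (PiM UNIV (\<lambda>_. N)) (\<lambda>x i. f (x i))) (prod_emb UNIV (\<lambda>_. distr M N f) J (Pi\<^sub>E J A))" .
qed

lemma stream_space_distr:
  assumes M: "prob_space M" and f[measurable]: "f \<in> M \<rightarrow>\<^sub>M N"
  shows "stream_space (distr M N f) = distr (stream_space M) (stream_space N) (smap f)"
proof -
  have st: "to_stream (\<lambda>i. f (x i)) = smap f (to_stream x)" for x :: "nat \<Rightarrow> _"
    by (simp add: to_stream_def stream.map_comp comp_def)
  have meas[measurable]: "(\<lambda>x i. f (x i)) \<in> PiM (UNIV::nat set) (\<lambda>_. M) \<rightarrow>\<^sub>M PiM UNIV (\<lambda>_. N)"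
  proof (rule measurable_PiM_single')
    fix i :: nat assume "i \<in> UNIV"
    show "(\<lambda>x. f (x i)) \<in> PiM UNIV (\<lambda>_. M) \<rightarrow>\<^sub>M N"
      by measurable
  next
    show "(\<lambda>x i. f (x i)) \<in> space (PiM UNIV (\<lambda>_. M)) \<rightarrow> (\<Pi>\<^sub>E i\<in>UNIV. space N)"
      using measurable_space[OF f] by (auto simp: space_PiM)
  qed
  have "stream_space (distr M N f) = distr (PiM UNIV (\<lambda>_. distr M N f)) (stream_space (distr M N f)) to_stream"
    by (rule stream_space_eq_distr)
  also have "\<dots> = distr (distr (PiM UNIV (\<lambda>_. M)) (PiM UNIV (\<lambda>_. N)) (\<lambda>x i. f (x i))) (stream_space N) to_stream"
    by (subst PiM_UNIV_distr[OF M f], rule distr_cong[OF refl], rule sets_stream_space_cong) simp_all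
  also have "\<dots> = distr (PiM UNIV (\<lambda>_. M)) (stream_space N) (to_stream \<circ> (\<lambda>x i. f (x i)))"
    by (rule distr_distr[OF measurable_to_stream meas])
  also have "to_stream \<circ> (\<lambda>x i. f (x i)) = smap f \<circ> to_stream"
    by (simp add: fun_eq_iff st)
  also have "distr (PiM UNIV (\<lambda>_. M)) (stream_space N) (smap f \<circ> to_stream) =
     distr (distr (PiM UNIV (\<lambda>_. M)) (stream_space M) to_stream) (stream_space N) (smap f)"
    by (rule distr_distr[symmetric, OF measurable_smap[OF f] measurable_to_stream])
  also have "distr (PiM UNIV (\<lambda>_. M)) (stream_space M) to_stream = stream_space M"
    by (rule stream_space_eq_distr[symmetric])
  finally show ?thesis .
qed

lemma uniform_scale:
  fixes h :: real assumes h: "0 < h"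
  shows "uniform_measure lborel {-h..h} = distr (uniform_measure lborel {-1..1}) borel (\<lambda>t. h * t)"
proof (rule measure_eqI)
  show "sets (uniform_measure lborel {-h..h}) = sets (distr (uniform_measure lborel {-1..1}) borel (\<lambda>t. h * t))"
    by simp
  fix A assume "A \<in> sets (uniform_measure lborel {-h..h})"
  then have A[measurable]: "A \<in> sets borel" by simp
  have "emeasure lborel (A \<inter> {-h..h}) = (\<integral>\<^sup>+x. indicator (A \<inter> {-h..h}) x \<partial>lborel)"
    by simp
  also have "\<dots> = ennreal h * (\<integral>\<^sup>+x. indicator (A \<inter> {-h..h}) (0 + h * x) \<partial>lborel)"
    using h by (subst nn_integral_real_affine[where c=h and t=0]) auto
  also have "(\<lambda>x. indicator (A \<inter> {-h..h}) (0 + h * x) :: ennreal) = indicator ((\<lambda>t. h * t) -` A \<inter> {-1..1})"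
  proof -
    have iff: "(-h \<le> h*x) = (-1 \<le> x)" "(h*x \<le> h) = (x \<le> 1)" for x
      using mult_le_cancel_left_pos[OF h, of "-1" x] mult_le_cancel_left_pos[OF h, of x 1] by simp_all
    show ?thesis by (auto simp: fun_eq_iff iff split: split_indicator)
  qed
  finally have eq: "emeasure lborel (A \<inter> {-h..h}) = ennreal h * emeasure lborel ((\<lambda>t. h * t) -` A \<inter> {-1..1})"
    by simp
  have "emeasure (distr (uniform_measure lborel {-1..1}) borel (\<lambda>t. h * t)) A
      = emeasure (uniform_measure lborel {-1..1}) ((\<lambda>t. h * t) -` A)"
    by (subst emeasure_distr) auto
  also have "\<dots> = emeasure lborel ((\<lambda>t. h * t) -` A \<inter> {-1..1}) / ennreal 2"
  proof -
    have hm: "(\<lambda>t. h * t) -` A \<in> sets borel"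
      using measurable_sets_borel[of "\<lambda>t. h * t" borel A] by simp
    show ?thesis by (subst emeasure_uniform_measure) (auto simp: hm Int_commute)
  qed
  finally have R: "emeasure (distr (uniform_measure lborel {-1..1}) borel (\<lambda>t. h * t)) A = emeasure lborel ((\<lambda>t. h * t) -` A \<inter> {-1..1}) / ennreal 2" .
  define X where "X = emeasure lborel ((\<lambda>t. h * t) -` A \<inter> {-1..1})"
  have "X \<le> emeasure lborel {-1..1::real}"
    unfolding X_def by (intro emeasure_mono) auto
  then have "X < \<top>" by (simp add: le_less_trans)
  then obtain x where x: "X = ennreal x" "0 \<le> x"
    by (cases X) auto
  have "emeasure (uniform_measure lborel {-h..h}) A = emeasure lborel (A \<inter> {-h..h}) / ennreal (2 * h)"
    using h by (subst emeasure_uniform_measure) (auto simp: Int_commute)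
  also have "\<dots> = ennreal (h * x) / ennreal (2 * h)"
    using h x by (simp add: eq X_def[symmetric] ennreal_mult)
  also have "\<dots> = ennreal (x / 2)"
    using h x by (subst divide_ennreal) auto
  also have "\<dots> = X / ennreal 2"
    using divide_ennreal[of x 2] x by simp
  finally show "emeasure (uniform_measure lborel {-h..h}) A = emeasure (distr (uniform_measure lborel {-1..1}) borel (\<lambda>t. h * t)) A"
    using R by (simp add: X_def)
qed

lemma prob_space_uniform_interval:
  fixes a b :: real assumes "a < b"
  shows "prob_space (uniform_measure lborel {a..b})"
  using assms by (intro prob_space_uniform_measure) auto

lemma prob_space_uniform_interval':
  fixes a b :: real assumes "a < b"
  shows "prob_space (uniform_measure lborel {a..<b})"
  using assms by (intro prob_space_uniform_measure) auto

lemma prob_space_mark_law: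
  assumes "0 < h" shows "prob_space (mark_law p h)"
  unfolding mark_law_def
  using assms by (intro prob_space_pair prob_space_uniform_interval prob_space_measure_pmf prob_space_exponential_density) auto

lemma sets_mark_law[measurable_cong]: "sets (mark_law p h) = sets mark_space"
  unfolding mark_law_def mark_space_def
  by (intro sets_pair_measure_cong) auto

definition scale_mark :: "real \<Rightarrow> real \<times> bool \<times> real \<Rightarrow> real \<times> bool \<times> real" where
  "scale_mark h x = (h * fst x, snd x)"

lemma measurable_scale_mark[measurable]:
  "(\<lambda>hx. scale_mark (fst hx) (snd hx)) \<in> borel \<Otimes>\<^sub>M mark_space \<rightarrow>\<^sub>M mark_space"
proof -
  have [measurable]: "(\<lambda>hx::real \<times> real \<times> bool \<times> real. fst hx * fst (snd hx)) \<in> borel_measurable (borel \<Otimes>\<^sub>M (borel \<Otimes>\<^sub>M (count_space UNIV \<Otimes>\<^sub>M borel)))"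
    by measurable
  show ?thesis
    unfolding scale_mark_def mark_space_def by measurable
qed

lemma measurable_scale_mark1[measurable]:
  "scale_mark h \<in> mark_space \<rightarrow>\<^sub>M mark_space"
  using measurable_Pair2[OF measurable_scale_mark, of h] by simp

lemma mark_law_scale:
  assumes h: "0 < h"
  shows "mark_law p h = distr (mark_law p 1) mark_space (scale_mark h)"
proof -
  let ?R = "measure_pmf (bernoulli_pmf p) \<Otimes>\<^sub>M density lborel (\<lambda>x. ennreal (exponential_density 1 x))"
  have "sigma_finite_measure (distr ?R ?R (\<lambda>x. x))"
    by (simp add: distr_id) (intro prob_space_imp_sigma_finite prob_space_pair prob_space_measure_pmf prob_space_exponential_density, simp)
  then have "mark_law p h = distr (uniform_measure lborel {-1..1}) borel (\<lambda>t. h * t) \<Otimes>\<^sub>M distr ?R ?R (\<lambda>x. x)"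
    unfolding mark_law_def by (subst uniform_scale[OF h]) (simp add: distr_id)
  also have "\<dots> = distr (uniform_measure lborel {-1..1} \<Otimes>\<^sub>M ?R) (borel \<Otimes>\<^sub>M ?R) (\<lambda>(x, y). (h * x, y))"
    by (intro pair_measure_distr) (auto simp: distr_id intro!: prob_space_imp_sigma_finite prob_space_pair prob_space_measure_pmf prob_space_exponential_density)
  also have "\<dots> = distr (mark_law p 1) mark_space (scale_mark h)"
    unfolding mark_law_def mark_space_def scale_mark_def
    by (intro distr_cong sets_pair_measure_cong) (auto simp: case_prod_beta)
  finally show ?thesis .
qed

abbreviation "Rpos \<equiv> restrict_space (borel :: real measure) {0<..}"

lemma measurable_fst_Rpos[measurable]: "fst \<in> Rpos \<Otimes>\<^sub>M M \<rightarrow>\<^sub>M borel"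
  by (rule measurable_compose[OF measurable_fst measurable_restrict_space1]) simp

lemma measurable_scale_mark_raw[measurable (raw)]:
  assumes "f \<in> M \<rightarrow>\<^sub>M borel" "g \<in> M \<rightarrow>\<^sub>M mark_space"
  shows "(\<lambda>x. scale_mark (f x) (g x)) \<in> M \<rightarrow>\<^sub>M mark_space"
  using measurable_compose[OF measurable_Pair[OF assms] measurable_scale_mark] by simp

lemma uniform_kernel[measurable]:
  "(\<lambda>h. uniform_measure lborel {-h..h}) \<in> Rpos \<rightarrow>\<^sub>M prob_algebra (borel :: real measure)"
proof (rule measurable_cong[THEN iffD2])
  show "h \<in> space Rpos \<Longrightarrow> uniform_measure lborel {-h..h} = distr (uniform_measure lborel {-1..1}) borel (\<lambda>t. h * t)" for h
    by (rule uniform_scale) (simp add: space_restrict_space)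
  have U: "uniform_measure lborel {-1..1::real} \<in> space (prob_algebra borel)"
    by (auto simp: space_prob_algebra intro!: prob_space_uniform_interval)
  show "(\<lambda>h. distr (uniform_measure lborel {-1..1}) borel (\<lambda>t. h * t)) \<in> Rpos \<rightarrow>\<^sub>M prob_algebra borel"
    by (rule measurable_distr_prob_space2[OF measurable_const[OF U]]) measurable
qed

lemma stream_kernel[measurable]:
  "(\<lambda>h. stream_space (mark_law p h)) \<in> Rpos \<rightarrow>\<^sub>M prob_algebra (stream_space mark_space)"
proof (rule measurable_cong[THEN iffD2])
  fix h assume "h \<in> space Rpos"
  then have h: "0 < h" by (simp add: space_restrict_space)
  have sm: "scale_mark h \<in> mark_law p 1 \<rightarrow>\<^sub>M mark_space"
    using measurable_scale_mark1 by (simp add: measurable_cong_sets[OF sets_mark_law refl])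
  show "stream_space (mark_law p h) = distr (stream_space (mark_law p 1)) (stream_space mark_space) (smap (scale_mark h))"
    by (subst mark_law_scale[OF h]) (rule stream_space_distr[OF prob_space_mark_law sm], simp)
next
  have U: "stream_space (mark_law p 1) \<in> space (prob_algebra (stream_space mark_space))"
    by (auto simp: space_prob_algebra sets_mark_law intro!: prob_space.prob_space_stream_space prob_space_mark_law sets_stream_space_cong)
  have f: "(\<lambda>(h, xs). smap (scale_mark h) xs) \<in> Rpos \<Otimes>\<^sub>M stream_space mark_space \<rightarrow>\<^sub>M stream_space mark_space"
  proof (rule measurable_stream_space2)
    fix n
    have "(\<lambda>x. scale_mark (fst x) (snd x !! n)) \<in> Rpos \<Otimes>\<^sub>M stream_space mark_space \<rightarrow>\<^sub>M mark_space"
      by measurable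
    then show "(\<lambda>x. (case x of (h, xs) \<Rightarrow> smap (scale_mark h) xs) !! n) \<in> Rpos \<Otimes>\<^sub>M stream_space mark_space \<rightarrow>\<^sub>M mark_space"
      by (simp add: case_prod_beta)
  qed
  show "(\<lambda>h. distr (stream_space (mark_law p 1)) (stream_space mark_space) (smap (scale_mark h))) \<in> Rpos \<rightarrow>\<^sub>M prob_algebra (stream_space mark_space)"
    by (rule measurable_distr_prob_space2[OF measurable_const[OF U] f])
qed


lemma poisson_sums:
  fixes r c :: real assumes r: "0 \<le> r"
  shows "(\<lambda>k. r ^ k / fact k * exp (- r) * c ^ k) sums exp (r * c - r)"
proof -
  have "(\<lambda>k. exp (- r) * ((r * c) ^ k /\<^sub>R fact k)) sums (exp (- r) * exp (r * c))"
    by (rule sums_mult[OF exp_converges])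
  moreover have "exp (- r) * exp (r * c) = exp (r * c - r)"
    by (simp add: exp_add[symmetric])
  moreover have "exp (- r) * ((r * c) ^ k /\<^sub>R fact k) = r ^ k / fact k * exp (- r) * c ^ k" for k
    by (simp add: power_mult_distrib divide_inverse mult_ac)
  ultimately show ?thesis by simp
qed

lemma poisson_gf:
  fixes r c :: real assumes r: "0 \<le> r" and c: "0 \<le> c"
  shows "(\<integral>\<^sup>+k. ennreal (c ^ k) \<partial>poisson_measure r) = ennreal (exp (r * c - r))"
proof -
  have "(\<integral>\<^sup>+k. ennreal (c ^ k) \<partial>poisson_measure r) =
      (\<integral>\<^sup>+k. ennreal (r ^ k / fact k * exp (- r)) * ennreal (c ^ k) \<partial>count_space UNIV)"
    unfolding poisson_measure_def using r by (subst nn_integral_density) auto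
  also have "\<dots> = (\<integral>\<^sup>+k. ennreal (r ^ k / fact k * exp (- r) * c ^ k) \<partial>count_space UNIV)"
    using r c by (intro nn_integral_cong, subst ennreal_mult[symmetric]) (auto simp: mult_ac)
  also have "\<dots> = (\<Sum>k. ennreal (r ^ k / fact k * exp (- r) * c ^ k))"
    by (rule nn_integral_count_space_nat)
  also have "\<dots> = ennreal (exp (r * c - r))"
    using poisson_sums[OF r, of c] r c
    by (subst suminf_ennreal2) (auto simp: sums_iff)
  finally show ?thesis .
qed

lemma prob_space_poisson: "prob_space (poisson_measure r)"
proof -
  have eq: "poisson_measure r = poisson_measure (max 0 r)"
    unfolding poisson_measure_def by simp
  have "emeasure (poisson_measure (max 0 r)) (space (poisson_measure (max 0 r))) = (\<integral>\<^sup>+k. ennreal (1 ^ k) \<partial>poisson_measure (max 0 r))"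
    by (simp add: nn_integral_const)
  also have "\<dots> = 1"
    by (subst poisson_gf) auto
  finally show ?thesis using eq by (intro prob_spaceI) simp
qed

lemma poisson_kernel[measurable]: "poisson_measure \<in> borel \<rightarrow>\<^sub>M prob_algebra (count_space UNIV)"
proof (rule measurable_prob_algebraI)
  show "prob_space (poisson_measure r)" for r by (rule prob_space_poisson)
  show "poisson_measure \<in> borel \<rightarrow>\<^sub>M subprob_algebra (count_space UNIV)"
  proof (rule measurable_subprob_algebra)
    show "subprob_space (poisson_measure r)" for r
      by (rule prob_space_imp_subprob_space[OF prob_space_poisson])
    show "sets (poisson_measure r) = sets (count_space UNIV)" for r
      by (simp add: poisson_measure_def)
    fix A :: "nat set"
    have "emeasure (poisson_measure r) A = (\<Sum>k. ennreal ((max 0 r) ^ k / fact k * exp (- max 0 r)) * indicator A k)" for r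
      unfolding poisson_measure_def
      by (subst emeasure_density) (auto simp: nn_integral_count_space_nat)
    moreover have "(\<lambda>r::real. \<Sum>k. ennreal ((max 0 r) ^ k / fact k * exp (- max 0 r)) * indicator A k) \<in> borel_measurable borel"
      by measurable
    ultimately show "(\<lambda>r. emeasure (poisson_measure r) A) \<in> borel_measurable borel"
      by simp
  qed
qed

lemma measurable_Rpos_borel[measurable (raw)]:
  "f \<in> M \<rightarrow>\<^sub>M Rpos \<Longrightarrow> f \<in> borel_measurable M"
  by (simp add: measurable_restrict_space2_iff)

lemma measurable_stick_tuple[measurable (raw)]:
  assumes "f1 \<in> borel_measurable M" "f2 \<in> borel_measurable M" "f3 \<in> borel_measurable M"
    "f4 \<in> M \<rightarrow>\<^sub>M count_space UNIV" "f5 \<in> M \<rightarrow>\<^sub>M stream_space mark_space"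
  shows "(\<lambda>x. (f1 x, f2 x, f3 x, f4 x, f5 x)) \<in> M \<rightarrow>\<^sub>M stick_space"
  unfolding stick_space_def using assms by measurable

lemma unif_pi_kernel[measurable]:
  "(\<lambda>x. uniform_measure lborel {0..<pi}) \<in> M \<rightarrow>\<^sub>M prob_algebra borel"
  by (rule measurable_const) (auto simp: space_prob_algebra intro!: prob_space_uniform_interval')

definition K5 :: "real \<Rightarrow> real \<Rightarrow> real \<Rightarrow> real \<Rightarrow> nat \<Rightarrow> _" where
  "K5 p h w \<phi> n = stream_space (mark_law p h) \<bind> (\<lambda>xs. return stick_space (h, w, \<phi>, n, xs))"
definition K4 :: "real \<Rightarrow> real \<Rightarrow> real \<Rightarrow> real \<Rightarrow> real \<Rightarrow> _" where
  "K4 lam p h w \<phi> = poisson_measure (2 * h * lam) \<bind> K5 p h w \<phi>"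
definition K3 :: "real \<Rightarrow> real \<Rightarrow> real \<Rightarrow> real \<Rightarrow> _" where
  "K3 lam p h w = uniform_measure lborel {0..<pi} \<bind> K4 lam p h w"
definition K2 :: "real \<Rightarrow> real \<Rightarrow> real \<Rightarrow> _" where
  "K2 lam p h = uniform_measure lborel {-h..h} \<bind> K3 lam p h"

definition Hlaw :: "(real \<Rightarrow> real) \<Rightarrow> real measure" where
  "Hlaw fH = restrict_space (density lborel (\<lambda>h. ennreal (tilde_fH fH h))) {0<..}"

lemma typical_stick_law_eq: "typical_stick_law lam p fH = Hlaw fH \<bind> K2 lam p"
  unfolding typical_stick_law_def Hlaw_def K2_def K3_def K4_def K5_def ..

lemma K5_meas[measurable (raw)]:
  assumes [measurable]: "h \<in> M \<rightarrow>\<^sub>M Rpos" "w \<in> borel_measurable M" "\<phi> \<in> borel_measurable M" "n \<in> M \<rightarrow>\<^sub>M count_space UNIV"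
  shows "(\<lambda>x. K5 p (h x) (w x) (\<phi> x) (n x)) \<in> M \<rightarrow>\<^sub>M prob_algebra stick_space"
  unfolding K5_def by measurable

lemma K4_meas[measurable (raw)]:
  assumes [measurable]: "h \<in> M \<rightarrow>\<^sub>M Rpos" "w \<in> borel_measurable M" "\<phi> \<in> borel_measurable M"
  shows "(\<lambda>x. K4 lam p (h x) (w x) (\<phi> x)) \<in> M \<rightarrow>\<^sub>M prob_algebra stick_space"
  unfolding K4_def by measurable

lemma K3_meas[measurable (raw)]:
  assumes [measurable]: "h \<in> M \<rightarrow>\<^sub>M Rpos" "w \<in> borel_measurable M"
  shows "(\<lambda>x. K3 lam p (h x) (w x)) \<in> M \<rightarrow>\<^sub>M prob_algebra stick_space"
  unfolding K3_def by measurable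

lemma K2_meas[measurable]:
  shows "K2 lam p \<in> Rpos \<rightarrow>\<^sub>M prob_algebra stick_space"
  unfolding K2_def by measurable

lemma stream_prod_integral:
  assumes M: "prob_space M" and g[measurable]: "g \<in> borel_measurable M"
  shows "(\<integral>\<^sup>+xs. (\<Prod>i<n. g (xs !! i)) \<partial>stream_space M) = (\<integral>\<^sup>+x. g x \<partial>M) ^ n"
proof (induction n)
  case 0
  interpret S: prob_space "stream_space M" by (rule prob_space.prob_space_stream_space[OF M])
  show ?case by (simp add: S.emeasure_space_1)
next
  case (Suc n)
  interpret prob_space M by fact
  have "(\<integral>\<^sup>+xs. (\<Prod>i<Suc n. g (xs !! i)) \<partial>stream_space M) =
      (\<integral>\<^sup>+x. (\<integral>\<^sup>+X. (\<Prod>i<Suc n. g ((x ## X) !! i)) \<partial>stream_space M) \<partial>M)"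
    by (rule nn_integral_stream_space) measurable
  also have "\<dots> = (\<integral>\<^sup>+x. g x * (\<integral>\<^sup>+X. (\<Prod>i<n. g (X !! i)) \<partial>stream_space M) \<partial>M)"
  proof (intro nn_integral_cong)
    fix x
    have m: "(\<lambda>X. \<Prod>i<n. g (X !! i)) \<in> borel_measurable (stream_space M)" by measurable
    show "(\<integral>\<^sup>+X. (\<Prod>i<Suc n. g ((x ## X) !! i)) \<partial>stream_space M) = g x * (\<integral>\<^sup>+X. (\<Prod>i<n. g (X !! i)) \<partial>stream_space M)"
      by (simp del: prod.lessThan_Suc add: prod.lessThan_Suc_shift nn_integral_cmult[OF m])
  qed
  also have "\<dots> = (\<integral>\<^sup>+x. g x \<partial>M) * (\<integral>\<^sup>+x. g x \<partial>M) ^ n"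
    by (simp add: Suc.IH nn_integral_multc)
  finally show ?case by simp
qed

lemma norm_vehicle_pos: "norm (vehicle_pos w \<phi> t) = \<bar>t - w\<bar>"
proof -
  have "((t - w) * cos \<phi>)\<^sup>2 + ((t - w) * sin \<phi>)\<^sup>2 = (t - w)\<^sup>2 * ((sin \<phi>)\<^sup>2 + (cos \<phi>)\<^sup>2)"
    by (simp only: power_mult_distrib distrib_left)
  then show ?thesis by (simp add: vehicle_pos_def udir_def norm_Pair)
qed

definition term_i :: "real \<Rightarrow> real \<Rightarrow> real \<times> bool \<times> real \<Rightarrow> real" where
  "term_i \<alpha> w x = snd (snd x) * \<bar>fst x - w\<bar> powr (- \<alpha>) * (if fst (snd x) then 1 else 0)"

lemma measurable_term_i[measurable (raw)]:
  assumes "f \<in> M \<rightarrow>\<^sub>M borel" "g \<in> M \<rightarrow>\<^sub>M mark_space"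
  shows "(\<lambda>x. term_i \<alpha> (f x) (g x)) \<in> borel_measurable M"
proof -
  have "(\<lambda>x. term_i \<alpha> (fst x) (snd x)) \<in> borel_measurable (borel \<Otimes>\<^sub>M mark_space)"
    unfolding term_i_def mark_space_def by measurable
  from measurable_compose[OF measurable_Pair[OF assms] this] show ?thesis by simp
qed

lemma stick_interference_eq:
  "stick_interference \<alpha> (h, w, \<phi>, n, xs) = (\<Sum>i<n. term_i \<alpha> w (xs !! i))"
  unfolding stick_interference_def term_i_def
  by (auto intro!: sum.cong simp: norm_vehicle_pos split: prod.split)

lemma stick_interference_alt:
  "stick_interference \<alpha> \<omega> = (\<lambda>n. \<Sum>i<n. term_i \<alpha> (fst (snd \<omega>)) (snd (snd (snd (snd \<omega>))) !! i)) (fst (snd (snd (snd \<omega>))))"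
  by (cases \<omega>) (simp add: stick_interference_eq)

lemma measurable_stick_interference[measurable]:
  "stick_interference \<alpha> \<in> borel_measurable stick_space"
proof -
  have "(\<lambda>\<omega>. (\<lambda>n. \<Sum>i<n. term_i \<alpha> (fst (snd \<omega>)) (snd (snd (snd (snd \<omega>))) !! i)) (fst (snd (snd (snd \<omega>))))) \<in> borel_measurable stick_space"
    unfolding stick_space_def
    by (rule measurable_compose_countable[where g="\<lambda>\<omega>. fst (snd (snd (snd \<omega>)))"]) measurable
  then show ?thesis by (subst stick_interference_alt[abs_def]) simp
qed

lemma nn_integral_exponential_density1:
  assumes l: "0 < l"
  shows "(\<integral>\<^sup>+x. ennreal (exponential_density l x) \<partial>lborel) = 1"
proof -
  interpret prob_space "density lborel (exponential_density l)"
    by (rule prob_space_exponential_density[OF l])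
  have "emeasure (density lborel (exponential_density l)) UNIV = 1"
    using emeasure_space_1 by simp
  then show ?thesis
    by (subst (asm) emeasure_density) (auto simp: exponential_density_def)
qed

lemma exp_laplace:
  fixes a :: real assumes a: "0 \<le> a"
  shows "(\<integral>\<^sup>+g. ennreal (exp (- a * g)) \<partial>density lborel (\<lambda>x. ennreal (exponential_density 1 x))) = ennreal (1 / (1 + a))"
proof -
  have "(\<integral>\<^sup>+g. ennreal (exp (- a * g)) \<partial>density lborel (\<lambda>x. ennreal (exponential_density 1 x))) =
      (\<integral>\<^sup>+g. ennreal (exponential_density 1 g) * ennreal (exp (- a * g)) \<partial>lborel)"
    by (subst nn_integral_density) (auto simp: exponential_density_def)
  also have "\<dots> = (\<integral>\<^sup>+g. ennreal (1 / (1 + a)) * ennreal (exponential_density (1 + a) g) \<partial>lborel)"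
  proof (intro nn_integral_cong)
    fix g :: real
    have e1: "exp (- g) * exp (- a * g) = exp (- g * (1 + a))"
      by (simp add: exp_add[symmetric] algebra_simps)
    have e2: "1 / (1 + a) * ((1 + a) * exp (- g * (1 + a))) = exp (- g * (1 + a))"
      using a by simp
    have "exp (- g) * exp (- a * g) = 1 / (1 + a) * ((1 + a) * exp (- g * (1 + a)))"
      using e1 e2 by simp
    then show "ennreal (exponential_density 1 g) * ennreal (exp (- a * g)) = ennreal (1 / (1 + a)) * ennreal (exponential_density (1 + a) g)"
      using a by (auto simp: exponential_density_def ennreal_mult[symmetric] simp del: ennreal_mult)
  qed
  also have "\<dots> = ennreal (1 / (1 + a))"
    using a by (subst nn_integral_cmult) (auto simp: nn_integral_exponential_density1)
  finally show ?thesis .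
qed

lemma nn_integral_interval_eq:
  fixes k :: "real \<Rightarrow> real"
  assumes [measurable]: "k \<in> borel_measurable borel"
    and k: "\<And>t. t \<in> {a..b} \<Longrightarrow> 0 \<le> k t \<and> k t \<le> B"
  shows "(\<integral>\<^sup>+t. ennreal (k t) * indicator {a..b} t \<partial>lborel) = ennreal (LINT t:{a..b}|lborel. k t)"
proof -
  have fin: "emeasure lborel {a..b} < \<top>"
    by (cases "a \<le> b") auto
  have int: "integrable lborel (\<lambda>t. indicator {a..b} t *\<^sub>R k t)"
    using k fin by (intro integrableI_bounded_set_indicator[where B=B]) auto
  have "(\<integral>\<^sup>+t. ennreal (k t) * indicator {a..b} t \<partial>lborel) = (\<integral>\<^sup>+t. ennreal (indicator {a..b} t *\<^sub>R k t) \<partial>lborel)"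
    by (intro nn_integral_cong) (auto split: split_indicator)
  also have "\<dots> = ennreal (LINT t:{a..b}|lborel. k t)"
    unfolding set_lebesgue_integral_def
    using k by (intro nn_integral_eq_integral int) (auto split: split_indicator)
  finally show ?thesis .
qed


definition Qf :: "real \<Rightarrow> real \<Rightarrow> real \<Rightarrow> real \<Rightarrow> real" where
  "Qf \<alpha> s w t = s * \<bar>t - w\<bar> powr (- \<alpha>) / (1 + s * \<bar>t - w\<bar> powr (- \<alpha>))"

lemma Qf_bounds: assumes s: "0 \<le> s" shows "0 \<le> Qf \<alpha> s w t \<and> Qf \<alpha> s w t \<le> 1"
proof -
  have "0 \<le> s * \<bar>t - w\<bar> powr (- \<alpha>)" using s by simp
  then show ?thesis unfolding Qf_def by (auto simp: divide_le_eq)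
qed

lemma Qf_measurable[measurable]: "(\<lambda>t. Qf \<alpha> s w t) \<in> borel_measurable borel"
  unfolding Qf_def by measurable

lemma mark_integral_inner:
  assumes p: "0 \<le> p" "p \<le> 1" and s: "0 \<le> s"
  shows "(\<integral>\<^sup>+y. ennreal (exp (- s * term_i \<alpha> w (t, y)))
     \<partial>(measure_pmf (bernoulli_pmf p) \<Otimes>\<^sub>M density lborel (\<lambda>x. ennreal (exponential_density 1 x))))
     = ennreal (1 - p * Qf \<alpha> s w t)"
proof -
  let ?E = "density lborel (\<lambda>x. ennreal (exponential_density 1 x))"
  let ?B = "measure_pmf (bernoulli_pmf p)"
  interpret E: sigma_finite_measure ?E
    by (intro prob_space_imp_sigma_finite prob_space_exponential_density) simp
  define r where "r = \<bar>t - w\<bar> powr (- \<alpha>)"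
  have r: "0 \<le> r" unfolding r_def by simp
  have m: "(\<lambda>y. ennreal (exp (- s * term_i \<alpha> w (t, y)))) \<in> borel_measurable (?B \<Otimes>\<^sub>M ?E)"
  proof -
    have "(\<lambda>x. ennreal (exp (- s * term_i \<alpha> w x))) \<in> borel_measurable mark_space"
      by measurable
    from measurable_Pair2[OF this[unfolded mark_space_def], of t]
    have "(\<lambda>y. ennreal (exp (- s * term_i \<alpha> w (t, y)))) \<in> borel_measurable (count_space UNIV \<Otimes>\<^sub>M borel)"
      by simp
    then show ?thesis
      by (subst measurable_cong_sets[OF sets_pair_measure_cong refl]) auto
  qed
  have "(\<integral>\<^sup>+y. ennreal (exp (- s * term_i \<alpha> w (t, y))) \<partial>(?B \<Otimes>\<^sub>M ?E)) =
      (\<integral>\<^sup>+b. \<integral>\<^sup>+g. ennreal (exp (- s * term_i \<alpha> w (t, b, g))) \<partial>?E \<partial>?B)"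
    by (rule E.nn_integral_fst[symmetric, OF m])
  also have "\<dots> = (\<integral>\<^sup>+b. ennreal (1 / (1 + s * r * (if b then 1 else 0))) \<partial>?B)"
  proof (intro nn_integral_cong)
    fix b :: bool
    have eq: "(\<lambda>g. ennreal (exp (- s * term_i \<alpha> w (t, b, g)))) = (\<lambda>g. ennreal (exp (- (s * r * (if b then 1 else 0)) * g)))"
      by (auto simp: term_i_def r_def fun_eq_iff algebra_simps)
    show "(\<integral>\<^sup>+g. ennreal (exp (- s * term_i \<alpha> w (t, b, g))) \<partial>?E) = ennreal (1 / (1 + s * r * (if b then 1 else 0)))"
      unfolding eq by (rule exp_laplace) (use s r in simp)
  qed
  also have "\<dots> = ennreal (1 / (1 + s * r)) * ennreal p + ennreal 1 * ennreal (1 - p)"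
    using p s r by (subst nn_integral_bernoulli_pmf) auto
  also have "\<dots> = ennreal (1 / (1 + s * r) * p + (1 - p))"
    using p s r by (simp add: ennreal_mult[symmetric] ennreal_plus[symmetric] del: ennreal_plus)
  also have "1 / (1 + s * r) * p + (1 - p) = 1 - p * Qf \<alpha> s w t"
  proof -
    have pos: "0 < 1 + s * r" using s r by (simp add: add_pos_nonneg)
    then show ?thesis unfolding Qf_def r_def[symmetric] by (simp add: field_simps)
  qed
  finally show ?thesis .
qed


lemma mark_integral:
  assumes h: "0 < h" and p: "0 \<le> p" "p \<le> 1" and s: "0 \<le> s"
  shows "(\<integral>\<^sup>+x. ennreal (exp (- s * term_i \<alpha> w x)) \<partial>mark_law p h)
     = ennreal ((LINT t:{-h..h}|lborel. 1 - p * Qf \<alpha> s w t) / (2 * h))"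
proof -
  let ?R = "measure_pmf (bernoulli_pmf p) \<Otimes>\<^sub>M density lborel (\<lambda>x. ennreal (exponential_density 1 x))"
  let ?U = "uniform_measure lborel {-h..h}"
  interpret R: sigma_finite_measure ?R
    by (intro prob_space_imp_sigma_finite prob_space_pair prob_space_measure_pmf prob_space_exponential_density) simp
  have m: "(\<lambda>x. ennreal (exp (- s * term_i \<alpha> w x))) \<in> borel_measurable (?U \<Otimes>\<^sub>M ?R)"
  proof -
    have "(\<lambda>x. ennreal (exp (- s * term_i \<alpha> w x))) \<in> borel_measurable mark_space"
      by measurable
    moreover have "sets (?U \<Otimes>\<^sub>M ?R) = sets mark_space"
      using sets_mark_law[of p h] unfolding mark_law_def .
    ultimately show ?thesis
      by (subst measurable_cong_sets) auto
  qed
  have k: "0 \<le> 1 - p * Qf \<alpha> s w t \<and> 1 - p * Qf \<alpha> s w t \<le> 1" for t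
    using Qf_bounds[OF s, of \<alpha> w t] p by (auto simp: mult_le_one)
  have "(\<integral>\<^sup>+x. ennreal (exp (- s * term_i \<alpha> w x)) \<partial>mark_law p h) =
      (\<integral>\<^sup>+t. \<integral>\<^sup>+y. ennreal (exp (- s * term_i \<alpha> w (t, y))) \<partial>?R \<partial>?U)"
    unfolding mark_law_def by (rule R.nn_integral_fst[symmetric, OF m])
  also have "\<dots> = (\<integral>\<^sup>+t. ennreal (1 - p * Qf \<alpha> s w t) \<partial>?U)"
    using p s by (intro nn_integral_cong mark_integral_inner) auto
  also have "\<dots> = (\<integral>\<^sup>+t. ennreal (1 - p * Qf \<alpha> s w t) * indicator {-h..h} t \<partial>lborel) / emeasure lborel {-h..h}"
    by (rule nn_integral_uniform_measure) auto
  also have "\<dots> = ennreal (LINT t:{-h..h}|lborel. 1 - p * Qf \<alpha> s w t) / ennreal (2 * h)"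
    using h k by (subst nn_integral_interval_eq[where B=1]) auto
  also have "\<dots> = ennreal ((LINT t:{-h..h}|lborel. 1 - p * Qf \<alpha> s w t) / (2 * h))"
    using h k by (intro divide_ennreal) (auto simp: set_lebesgue_integral_def intro!: integral_nonneg split: split_indicator)
  finally show ?thesis .
qed

lemma Q_substitution:
  fixes \<alpha> s \<delta> h w :: real
  assumes \<alpha>: "2 < \<alpha>" and \<delta>: "\<delta> = 2 / \<alpha>" and s: "0 < s" and h: "0 < h"
  shows "(LINT t:{-h..h}|lborel. Qf \<alpha> s w t) =
     s powr (\<delta> / 2) * (LINT v:{(- w - h) * s powr (- \<delta> / 2)..(- w + h) * s powr (- \<delta> / 2)}|lborel.
               1 / (1 + \<bar>v\<bar> powr (2 / \<delta>)))"
proof -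
  define c where "c = s powr (- \<delta> / 2)"
  have c: "0 < c" unfolding c_def using s by simp
  have a2: "2 / \<delta> = \<alpha>" using \<delta> \<alpha> by simp
  have cpow: "c powr \<alpha> = 1 / s"
  proof -
    have e: "- \<delta> / 2 * \<alpha> = -1" using \<delta> \<alpha> by (simp add: field_simps)
    show ?thesis unfolding c_def powr_powr e using s by (simp add: powr_minus_divide)
  qed
  have sc: "s powr (\<delta> / 2) * c = 1"
    unfolding c_def using s by (simp add: powr_add[symmetric])
  let ?g = "\<lambda>v::real. 1 / (1 + \<bar>v\<bar> powr \<alpha>)"
  have "(LINT v:{(- w - h) * c..(- w + h) * c}|lborel. ?g v) =
      (\<integral>v. indicator {(- w - h) * c..(- w + h) * c} v *\<^sub>R ?g v \<partial>lborel)"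
    by (simp add: set_lebesgue_integral_def)
  also have "\<dots> = \<bar>c\<bar> *\<^sub>R (\<integral>x. indicator {(- w - h) * c..(- w + h) * c} (- c * w + c * x) *\<^sub>R ?g (- c * w + c * x) \<partial>lborel)"
    using c by (intro lborel_integral_real_affine) simp
  also have "(\<integral>x. indicator {(- w - h) * c..(- w + h) * c} (- c * w + c * x) *\<^sub>R ?g (- c * w + c * x) \<partial>lborel)
      = (\<integral>x. indicator {-h..h} x *\<^sub>R Qf \<alpha> s w x \<partial>lborel)"
  proof (rule integral_cong_AE)
    show "AE x in lborel. indicator {(- w - h) * c..(- w + h) * c} (- c * w + c * x) *\<^sub>R ?g (- c * w + c * x)
        = indicator {-h..h} x *\<^sub>R Qf \<alpha> s w x"
      using AE_lborel_singleton[of w]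
    proof eventually_elim
      case (elim x)
      have ind: "indicator {(- w - h) * c..(- w + h) * c} (- c * w + c * x) = (indicator {-h..h} x :: real)"
      proof -
        have "((- w - h) * c \<le> - c * w + c * x) = (c * (-h) \<le> c * x)"
          by (simp add: algebra_simps)
        also have "\<dots> = (-h \<le> x)" using c by (rule mult_le_cancel_left_pos)
        finally have "((- w - h) * c \<le> - c * w + c * x) = (-h \<le> x)" .
        moreover have "(- c * w + c * x \<le> (- w + h) * c) = (x \<le> h)"
          using c by (simp add: algebra_simps mult_le_cancel_left_pos)
        ultimately show ?thesis by (simp add: indicator_def)
      qed
      have d: "0 < \<bar>x - w\<bar>" using elim by simp
      have "\<bar>- c * w + c * x\<bar> = c * \<bar>x - w\<bar>"
      proof -
        have "- c * w + c * x = c * (x - w)" by (simp add: algebra_simps)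
        then show ?thesis using c by (simp add: abs_mult)
      qed
      then have "\<bar>- c * w + c * x\<bar> powr \<alpha> = c powr \<alpha> * \<bar>x - w\<bar> powr \<alpha>"
        using c by (simp add: powr_mult)
      then have g: "?g (- c * w + c * x) = 1 / (1 + \<bar>x - w\<bar> powr \<alpha> / s)"
        by (simp add: cpow)
      have "Qf \<alpha> s w x = s * (1 / \<bar>x - w\<bar> powr \<alpha>) / (1 + s * (1 / \<bar>x - w\<bar> powr \<alpha>))"
        unfolding Qf_def using d by (simp add: powr_minus divide_inverse)
      also have "\<dots> = 1 / (1 + \<bar>x - w\<bar> powr \<alpha> / s)"
        using d s by (simp add: field_simps)
      finally show ?case using ind g by simp
    qed
  qed simp_all
  finally have "(LINT v:{(- w - h) * c..(- w + h) * c}|lborel. ?g v) = c * (LINT t:{-h..h}|lborel. Qf \<alpha> s w t)"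
    using c by (simp add: set_lebesgue_integral_def)
  then have "s powr (\<delta> / 2) * (LINT v:{(- w - h) * c..(- w + h) * c}|lborel. ?g v) = (LINT t:{-h..h}|lborel. Qf \<alpha> s w t)"
    using sc by (simp add: mult.assoc[symmetric])
  then show ?thesis unfolding c_def a2 by simp
qed

lemma measurable_interval_integral:
  fixes f :: "'a \<Rightarrow> real \<Rightarrow> real"
  assumes f: "(\<lambda>x. f (fst x) (snd x)) \<in> borel_measurable (M \<Otimes>\<^sub>M borel)"
    and a[measurable]: "a \<in> borel_measurable M" and b[measurable]: "b \<in> borel_measurable M"
  shows "(\<lambda>x. LINT t:{a x..b x}|lborel. f x t) \<in> borel_measurable M"
proof -
  have f'[measurable]: "(\<lambda>x. f (fst x) (snd x)) \<in> borel_measurable (M \<Otimes>\<^sub>M lborel)"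
    using f by (subst measurable_cong_sets[OF sets_pair_measure_cong refl]) auto
  have "(\<lambda>x. indicator {a (fst x)..b (fst x)} (snd x) *\<^sub>R f (fst x) (snd x)) \<in> borel_measurable (M \<Otimes>\<^sub>M lborel)"
  proof -
    have "(\<lambda>x. (if a (fst x) \<le> snd x \<and> snd x \<le> b (fst x) then 1 else 0) * f (fst x) (snd x)) \<in> borel_measurable (M \<Otimes>\<^sub>M lborel)"
      by measurable
    then show ?thesis by (simp add: indicator_def)
  qed
  then have "(\<lambda>x. \<integral>t. indicator {a x..b x} t *\<^sub>R f x t \<partial>lborel) \<in> borel_measurable M"
    by (intro lborel.borel_measurable_lebesgue_integral) (simp add: split_beta')
  then show ?thesis by (simp add: set_lebesgue_integral_def)
qed

lemma Qf_measurable2[measurable (raw)]: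
  assumes [measurable]: "f \<in> borel_measurable M" "g \<in> borel_measurable M"
  shows "(\<lambda>x. Qf \<alpha> s (f x) (g x)) \<in> borel_measurable M"
  unfolding Qf_def by measurable

definition cm :: "real \<Rightarrow> real \<Rightarrow> real \<Rightarrow> real \<Rightarrow> real \<Rightarrow> real" where
  "cm \<alpha> s p h w = (LINT t:{-h..h}|lborel. 1 - p * Qf \<alpha> s w t) / (2 * h)"

definition Ew :: "real \<Rightarrow> real \<Rightarrow> real \<Rightarrow> real \<Rightarrow> real \<Rightarrow> real \<Rightarrow> real" where
  "Ew \<alpha> s lam p h w = exp (2 * h * lam * cm \<alpha> s p h w - 2 * h * lam)"

definition Phi :: "real \<Rightarrow> real \<Rightarrow> real \<Rightarrow> real \<Rightarrow> real \<Rightarrow> real" where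
  "Phi \<alpha> s lam p h = (LINT w:{-h..h}|lborel. Ew \<alpha> s lam p h w) / (2 * h)"

lemma cm_measurable: "(\<lambda>x. cm \<alpha> s p (fst x) (snd x)) \<in> borel_measurable (borel \<Otimes>\<^sub>M borel)"
proof -
  have "(\<lambda>x. LINT t:{- fst x..fst x}|lborel. 1 - p * Qf \<alpha> s (snd x) t) \<in> borel_measurable (borel \<Otimes>\<^sub>M borel)"
    by (rule measurable_interval_integral[where f="\<lambda>x t. 1 - p * Qf \<alpha> s (snd x) t"]) measurable
  then show ?thesis unfolding cm_def by measurable
qed

lemma Ew_measurable: "(\<lambda>x. Ew \<alpha> s lam p (fst x) (snd x)) \<in> borel_measurable (borel \<Otimes>\<^sub>M borel)"
  unfolding Ew_def using cm_measurable by measurable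

lemma Phi_measurable[measurable]: "(\<lambda>h. Phi \<alpha> s lam p h) \<in> borel_measurable borel"
proof -
  have "(\<lambda>h. LINT w:{- h..h}|lborel. Ew \<alpha> s lam p h w) \<in> borel_measurable borel"
    by (rule measurable_interval_integral[where f="\<lambda>h w. Ew \<alpha> s lam p h w"]) (use Ew_measurable in measurable)
  then show ?thesis unfolding Phi_def by measurable
qed

lemma Fs_measurable[measurable]:
  "(\<lambda>\<omega>. ennreal (exp (- s * stick_interference \<alpha> \<omega>))) \<in> borel_measurable stick_space"
  by measurable

lemma int_K5:
  assumes h: "0 < h" and p: "0 \<le> p" "p \<le> 1" and s: "0 \<le> s"
  shows "(\<integral>\<^sup>+\<omega>. ennreal (exp (- s * stick_interference \<alpha> \<omega>)) \<partial>K5 p h w \<phi> n) = ennreal (cm \<alpha> s p h w ^ n)"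
proof -
  have ret: "(\<lambda>xs. return stick_space (h, w, \<phi>, n, xs)) \<in> stream_space (mark_law p h) \<rightarrow>\<^sub>M subprob_algebra stick_space"
    by (subst measurable_cong_sets[OF sets_stream_space_cong[OF sets_mark_law] refl]) measurable
  have gm: "(\<lambda>x. ennreal (exp (- s * term_i \<alpha> w x))) \<in> borel_measurable (mark_law p h)"
    by (subst measurable_cong_sets[OF sets_mark_law refl]) measurable
  have cm0: "0 \<le> cm \<alpha> s p h w"
  proof -
    have "0 \<le> 1 - p * Qf \<alpha> s w t" for t
      using Qf_bounds[OF s, of \<alpha> w t] p by (auto simp: mult_le_one)
    then show ?thesis using h unfolding cm_def
      by (intro divide_nonneg_pos) (auto simp: set_lebesgue_integral_def intro!: integral_nonneg split: split_indicator)
  qed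
  have "(\<integral>\<^sup>+\<omega>. ennreal (exp (- s * stick_interference \<alpha> \<omega>)) \<partial>K5 p h w \<phi> n) =
      (\<integral>\<^sup>+xs. \<integral>\<^sup>+\<omega>. ennreal (exp (- s * stick_interference \<alpha> \<omega>)) \<partial>return stick_space (h, w, \<phi>, n, xs) \<partial>stream_space (mark_law p h))"
    unfolding K5_def by (rule nn_integral_bind[OF Fs_measurable ret])
  also have "\<dots> = (\<integral>\<^sup>+xs. ennreal (exp (- s * stick_interference \<alpha> (h, w, \<phi>, n, xs))) \<partial>stream_space (mark_law p h))"
    by (intro nn_integral_cong nn_integral_return Fs_measurable)
       (simp add: stick_space_def space_pair_measure space_stream_space mark_space_def)
  also have "\<dots> = (\<integral>\<^sup>+xs. (\<Prod>i<n. ennreal (exp (- s * term_i \<alpha> w (xs !! i)))) \<partial>stream_space (mark_law p h))"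
    by (intro nn_integral_cong)
       (simp add: stick_interference_eq sum_distrib_left exp_sum prod_ennreal)
  also have "\<dots> = (\<integral>\<^sup>+x. ennreal (exp (- s * term_i \<alpha> w x)) \<partial>mark_law p h) ^ n"
    by (rule stream_prod_integral[OF prob_space_mark_law[OF h] gm])
  also have "\<dots> = ennreal (cm \<alpha> s p h w) ^ n"
    by (subst mark_integral[OF h p s]) (simp add: cm_def)
  also have "\<dots> = ennreal (cm \<alpha> s p h w ^ n)"
    using cm0 by (simp add: ennreal_power)
  finally show ?thesis .
qed


lemma interval_integral_bounds:
  fixes k :: "real \<Rightarrow> real"
  assumes [measurable]: "k \<in> borel_measurable borel"
    and k: "\<And>t. t \<in> {a..b} \<Longrightarrow> 0 \<le> k t \<and> k t \<le> B" and ab: "a \<le> b"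
  shows "0 \<le> (LINT t:{a..b}|lborel. k t) \<and> (LINT t:{a..b}|lborel. k t) \<le> B * (b - a)"
proof
  show "0 \<le> (LINT t:{a..b}|lborel. k t)"
    using k by (auto simp: set_lebesgue_integral_def intro!: integral_nonneg split: split_indicator)
  have B: "0 \<le> B" using k[of a] ab by auto
  have "ennreal (LINT t:{a..b}|lborel. k t) = (\<integral>\<^sup>+t. ennreal (k t) * indicator {a..b} t \<partial>lborel)"
    by (rule nn_integral_interval_eq[symmetric, where B=B]) (use k in auto)
  also have "\<dots> \<le> (\<integral>\<^sup>+t. ennreal B * indicator {a..b} t \<partial>lborel)"
    using k by (intro nn_integral_mono) (auto split: split_indicator intro!: ennreal_leI)
  also have "\<dots> = ennreal (B * (b - a))"
    using ab B by (simp add: nn_integral_cmult ennreal_mult)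
  finally show "(LINT t:{a..b}|lborel. k t) \<le> B * (b - a)"
    using B ab by (subst (asm) ennreal_le_iff) auto
qed

lemma cm_bounds:
  assumes h: "0 < h" and p: "0 \<le> p" "p \<le> 1" and s: "0 \<le> s"
  shows "0 \<le> cm \<alpha> s p h w \<and> cm \<alpha> s p h w \<le> 1"
proof -
  have k: "0 \<le> 1 - p * Qf \<alpha> s w t \<and> 1 - p * Qf \<alpha> s w t \<le> 1" for t
    using Qf_bounds[OF s, of \<alpha> w t] p by (auto simp: mult_le_one)
  have "0 \<le> (LINT t:{-h..h}|lborel. 1 - p * Qf \<alpha> s w t) \<and> (LINT t:{-h..h}|lborel. 1 - p * Qf \<alpha> s w t) \<le> 1 * (h - - h)"
    using h k by (intro interval_integral_bounds) auto
  then show ?thesis using h unfolding cm_def by (auto simp: divide_le_eq)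
qed

lemma Ew_bounds:
  assumes h: "0 < h" and p: "0 \<le> p" "p \<le> 1" and s: "0 \<le> s" and lam: "0 \<le> lam"
  shows "0 \<le> Ew \<alpha> s lam p h w \<and> Ew \<alpha> s lam p h w \<le> 1"
proof -
  have "2 * h * lam * cm \<alpha> s p h w \<le> 2 * h * lam * 1"
    using cm_bounds[OF h p s, of \<alpha> w] h lam by (intro mult_left_mono) auto
  then show ?thesis unfolding Ew_def by simp
qed

lemma int_K4:
  assumes h: "0 < h" and p: "0 \<le> p" "p \<le> 1" and s: "0 \<le> s" and lam: "0 \<le> lam"
  shows "(\<integral>\<^sup>+\<omega>. ennreal (exp (- s * stick_interference \<alpha> \<omega>)) \<partial>K4 lam p h w \<phi>) = ennreal (Ew \<alpha> s lam p h w)"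
proof -
  have hR: "h \<in> space Rpos" using h by (simp add: space_restrict_space)
  have "(\<lambda>n. K5 p ((\<lambda>_. h) n) ((\<lambda>_. w) n) ((\<lambda>_. \<phi>) n) ((\<lambda>n. n) n)) \<in> count_space UNIV \<rightarrow>\<^sub>M prob_algebra stick_space"
    by (intro K5_meas measurable_const hR) auto
  then have K0: "K5 p h w \<phi> \<in> count_space UNIV \<rightarrow>\<^sub>M subprob_algebra stick_space"
    by (rule measurable_prob_algebraD)
  have K: "K5 p h w \<phi> \<in> poisson_measure (2 * h * lam) \<rightarrow>\<^sub>M subprob_algebra stick_space"
    using K0 by (subst measurable_cong_sets[where M'="count_space UNIV" and N'="subprob_algebra stick_space"]) (auto simp: poisson_measure_def)
  have "(\<integral>\<^sup>+\<omega>. ennreal (exp (- s * stick_interference \<alpha> \<omega>)) \<partial>K4 lam p h w \<phi>) =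
      (\<integral>\<^sup>+n. \<integral>\<^sup>+\<omega>. ennreal (exp (- s * stick_interference \<alpha> \<omega>)) \<partial>K5 p h w \<phi> n \<partial>poisson_measure (2 * h * lam))"
    unfolding K4_def by (rule nn_integral_bind[OF Fs_measurable K])
  also have "\<dots> = (\<integral>\<^sup>+n. ennreal (cm \<alpha> s p h w ^ n) \<partial>poisson_measure (2 * h * lam))"
    by (intro nn_integral_cong int_K5 h p s)
  also have "\<dots> = ennreal (Ew \<alpha> s lam p h w)"
    unfolding Ew_def using h lam cm_bounds[OF h p s, of \<alpha> w] by (subst poisson_gf) (auto simp: mult_ac)
  finally show ?thesis .
qed

lemma int_K3:
  assumes h: "0 < h" and p: "0 \<le> p" "p \<le> 1" and s: "0 \<le> s" and lam: "0 \<le> lam"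
  shows "(\<integral>\<^sup>+\<omega>. ennreal (exp (- s * stick_interference \<alpha> \<omega>)) \<partial>K3 lam p h w) = ennreal (Ew \<alpha> s lam p h w)"
proof -
  have hR: "h \<in> space Rpos" using h by (simp add: space_restrict_space)
  have "(\<lambda>\<phi>. K4 lam p ((\<lambda>_. h) \<phi>) ((\<lambda>_. w) \<phi>) ((\<lambda>\<phi>. \<phi>) \<phi>)) \<in> borel \<rightarrow>\<^sub>M prob_algebra stick_space"
    by (intro K4_meas measurable_const hR) auto
  then have K0: "K4 lam p h w \<in> borel \<rightarrow>\<^sub>M subprob_algebra stick_space"
    by (rule measurable_prob_algebraD)
  have K: "K4 lam p h w \<in> uniform_measure lborel {0..<pi} \<rightarrow>\<^sub>M subprob_algebra stick_space"
    using K0 by (subst measurable_cong_sets[where M'=borel and N'="subprob_algebra stick_space"]) auto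
  interpret U: prob_space "uniform_measure lborel {0..<pi}"
    by (rule prob_space_uniform_interval') simp
  have "(\<integral>\<^sup>+\<omega>. ennreal (exp (- s * stick_interference \<alpha> \<omega>)) \<partial>K3 lam p h w) =
      (\<integral>\<^sup>+\<phi>. \<integral>\<^sup>+\<omega>. ennreal (exp (- s * stick_interference \<alpha> \<omega>)) \<partial>K4 lam p h w \<phi> \<partial>uniform_measure lborel {0..<pi})"
    unfolding K3_def by (rule nn_integral_bind[OF Fs_measurable K])
  also have "\<dots> = (\<integral>\<^sup>+\<phi>. ennreal (Ew \<alpha> s lam p h w) \<partial>uniform_measure lborel {0..<pi})"
    by (intro nn_integral_cong int_K4 h p s lam)
  also have "\<dots> = ennreal (Ew \<alpha> s lam p h w)"
    by (simp add: nn_integral_const U.emeasure_space_1)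
  finally show ?thesis .
qed

lemma Phi_bounds:
  assumes h: "0 < h" and p: "0 \<le> p" "p \<le> 1" and s: "0 \<le> s" and lam: "0 \<le> lam"
  shows "0 \<le> Phi \<alpha> s lam p h \<and> Phi \<alpha> s lam p h \<le> 1"
proof -
  have m: "(\<lambda>w. Ew \<alpha> s lam p h w) \<in> borel_measurable borel"
    using measurable_Pair2[OF Ew_measurable, of h] by simp
  have "0 \<le> (LINT w:{-h..h}|lborel. Ew \<alpha> s lam p h w) \<and> (LINT w:{-h..h}|lborel. Ew \<alpha> s lam p h w) \<le> 1 * (h - - h)"
    using h Ew_bounds[OF h p s lam] by (intro interval_integral_bounds m) auto
  then show ?thesis using h unfolding Phi_def by (auto simp: divide_le_eq)
qed

lemma int_K2:
  assumes h: "0 < h" and p: "0 \<le> p" "p \<le> 1" and s: "0 \<le> s" and lam: "0 \<le> lam"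
  shows "(\<integral>\<^sup>+\<omega>. ennreal (exp (- s * stick_interference \<alpha> \<omega>)) \<partial>K2 lam p h) = ennreal (Phi \<alpha> s lam p h)"
proof -
  have hR: "h \<in> space Rpos" using h by (simp add: space_restrict_space)
  have m[measurable]: "(\<lambda>w. Ew \<alpha> s lam p h w) \<in> borel_measurable borel"
    using measurable_Pair2[OF Ew_measurable, of h] by simp
  have "(\<lambda>w. K3 lam p ((\<lambda>_. h) w) ((\<lambda>w. w) w)) \<in> borel \<rightarrow>\<^sub>M prob_algebra stick_space"
    by (intro K3_meas measurable_const hR) auto
  then have K0: "K3 lam p h \<in> borel \<rightarrow>\<^sub>M subprob_algebra stick_space"
    by (rule measurable_prob_algebraD)
  have K: "K3 lam p h \<in> uniform_measure lborel {-h..h} \<rightarrow>\<^sub>M subprob_algebra stick_space"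
    using K0 by (subst measurable_cong_sets[where M'=borel and N'="subprob_algebra stick_space"]) auto
  have "(\<integral>\<^sup>+\<omega>. ennreal (exp (- s * stick_interference \<alpha> \<omega>)) \<partial>K2 lam p h) =
      (\<integral>\<^sup>+w. \<integral>\<^sup>+\<omega>. ennreal (exp (- s * stick_interference \<alpha> \<omega>)) \<partial>K3 lam p h w \<partial>uniform_measure lborel {-h..h})"
    unfolding K2_def by (rule nn_integral_bind[OF Fs_measurable K])
  also have "\<dots> = (\<integral>\<^sup>+w. ennreal (Ew \<alpha> s lam p h w) \<partial>uniform_measure lborel {-h..h})"
    by (intro nn_integral_cong int_K3 h p s lam)
  also have "\<dots> = (\<integral>\<^sup>+w. ennreal (Ew \<alpha> s lam p h w) * indicator {-h..h} w \<partial>lborel) / emeasure lborel {-h..h}"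
    by (rule nn_integral_uniform_measure) auto
  also have "\<dots> = ennreal (LINT w:{-h..h}|lborel. Ew \<alpha> s lam p h w) / ennreal (2 * h)"
    using h Ew_bounds[OF h p s lam] by (subst nn_integral_interval_eq[where B=1]) auto
  also have "\<dots> = ennreal (Phi \<alpha> s lam p h)"
    unfolding Phi_def using h Ew_bounds[OF h p s lam]
    by (intro divide_ennreal) (auto simp: set_lebesgue_integral_def intro!: integral_nonneg split: split_indicator)
  finally show ?thesis .
qed

lemma tilde_fH_nonneg:
  assumes "\<And>h. 0 \<le> fH h" "\<And>h. h \<le> 0 \<Longrightarrow> fH h = 0" "0 < mean_half_length fH"
  shows "0 \<le> tilde_fH fH h"
proof (cases "h \<le> 0")
  case True then show ?thesis using assms by (simp add: tilde_fH_def)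
next
  case False then show ?thesis using assms(1)[of h] assms(3) by (simp add: tilde_fH_def)
qed

lemma sets_Hlaw: "sets (Hlaw fH) = sets Rpos"
  unfolding Hlaw_def by (rule sets_restrict_space_cong) simp

lemma int_law:
  assumes p: "0 \<le> p" "p \<le> 1" and s: "0 \<le> s" and lam: "0 \<le> lam"
    and fHm[measurable]: "fH \<in> borel_measurable borel"
    and fH0: "\<And>h. 0 \<le> fH h" and fHneg: "\<And>h. h \<le> 0 \<Longrightarrow> fH h = 0"
    and fHi: "integrable lborel (\<lambda>h. h * fH h)" and mean: "0 < mean_half_length fH"
  shows "(\<integral>\<^sup>+\<omega>. ennreal (exp (- s * stick_interference \<alpha> \<omega>)) \<partial>typical_stick_law lam p fH)
     = ennreal (LINT h:{0<..}|lborel. Phi \<alpha> s lam p h * tilde_fH fH h)"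
proof -
  have tf[measurable]: "tilde_fH fH \<in> borel_measurable borel"
    unfolding tilde_fH_def[abs_def] by measurable
  have tf0: "0 \<le> tilde_fH fH h" for h by (rule tilde_fH_nonneg[OF fH0 fHneg mean])
  have K: "K2 lam p \<in> Hlaw fH \<rightarrow>\<^sub>M subprob_algebra stick_space"
    using measurable_prob_algebraD[OF K2_meas]
    by (subst measurable_cong_sets[OF sets_Hlaw refl])
  have "(\<integral>\<^sup>+\<omega>. ennreal (exp (- s * stick_interference \<alpha> \<omega>)) \<partial>typical_stick_law lam p fH) =
      (\<integral>\<^sup>+h. \<integral>\<^sup>+\<omega>. ennreal (exp (- s * stick_interference \<alpha> \<omega>)) \<partial>K2 lam p h \<partial>Hlaw fH)"
    unfolding typical_stick_law_eq by (rule nn_integral_bind[OF Fs_measurable K])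
  also have "\<dots> = (\<integral>\<^sup>+h. ennreal (Phi \<alpha> s lam p h) \<partial>Hlaw fH)"
    by (intro nn_integral_cong int_K2 p s lam) (simp add: Hlaw_def space_restrict_space)
  also have "\<dots> = (\<integral>\<^sup>+h. ennreal (Phi \<alpha> s lam p h) * indicator {0<..} h \<partial>density lborel (\<lambda>h. ennreal (tilde_fH fH h)))"
    unfolding Hlaw_def by (rule nn_integral_restrict_space) simp
  also have "\<dots> = (\<integral>\<^sup>+h. ennreal (tilde_fH fH h) * (ennreal (Phi \<alpha> s lam p h) * indicator {0<..} h) \<partial>lborel)"
    by (rule nn_integral_density) auto
  also have "\<dots> = (\<integral>\<^sup>+h. ennreal (indicator {0<..} h *\<^sub>R (Phi \<alpha> s lam p h * tilde_fH fH h)) \<partial>lborel)"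
  proof (intro nn_integral_cong)
    fix h :: real
    show "ennreal (tilde_fH fH h) * (ennreal (Phi \<alpha> s lam p h) * indicator {0<..} h) = ennreal (indicator {0<..} h *\<^sub>R (Phi \<alpha> s lam p h * tilde_fH fH h))"
    proof (cases "0 < h")
      case True
      then show ?thesis using Phi_bounds[OF True p s lam, of \<alpha>] tf0[of h]
        by (simp add: ennreal_mult[symmetric] mult.commute)
    qed simp
  qed
  also have "\<dots> = ennreal (LINT h:{0<..}|lborel. Phi \<alpha> s lam p h * tilde_fH fH h)"
    unfolding set_lebesgue_integral_def
  proof (intro nn_integral_eq_integral)
    have "integrable lborel (tilde_fH fH)"
      unfolding tilde_fH_def[abs_def] using fHi by simp
    then show "integrable lborel (\<lambda>h. indicator {0<..} h *\<^sub>R (Phi \<alpha> s lam p h * tilde_fH fH h))"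
    proof (rule Bochner_Integration.integrable_bound)
      have "(\<lambda>h. indicator {0<..} h *\<^sub>R (Phi \<alpha> s lam p h * tilde_fH fH h)) \<in> borel_measurable borel"
        using Phi_measurable tf by (intro borel_measurable_scaleR borel_measurable_times borel_measurable_indicator) auto
      then show "(\<lambda>h. indicator {0<..} h *\<^sub>R (Phi \<alpha> s lam p h * tilde_fH fH h)) \<in> borel_measurable lborel"
        by simp
      show "AE h in lborel. norm (indicator {0<..} h *\<^sub>R (Phi \<alpha> s lam p h * tilde_fH fH h)) \<le> norm (tilde_fH fH h)"
      proof (intro AE_I2)
        fix h :: real
        show "norm (indicator {0<..} h *\<^sub>R (Phi \<alpha> s lam p h * tilde_fH fH h)) \<le> norm (tilde_fH fH h)"
        proof (cases "0 < h")
          case True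
          then show ?thesis using Phi_bounds[OF True p s lam, of \<alpha>] tf0[of h]
            by (simp add: abs_mult mult_left_le_one_le)
        qed (simp add: tf0)
      qed
    qed
    show "AE h in lborel. 0 \<le> indicator {0<..} h *\<^sub>R (Phi \<alpha> s lam p h * tilde_fH fH h)"
      using Phi_bounds[OF _ p s lam, of _ \<alpha>] tf0 by (intro AE_I2) (auto split: split_indicator)
  qed
  finally show ?thesis .
qed

lemma cm_eq:
  assumes h: "0 < h" and s: "0 \<le> s"
  shows "2 * h * cm \<alpha> s p h w = 2 * h - p * (LINT t:{-h..h}|lborel. Qf \<alpha> s w t)"
proof -
  have fin: "emeasure lborel {-h..h} < \<top>" by (cases "- h \<le> h") auto
  have i1: "set_integrable lborel {-h..h} (\<lambda>t. 1::real)"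
    unfolding set_integrable_def using fin
    by (intro integrableI_bounded_set_indicator[where B=1]) auto
  have i2: "set_integrable lborel {-h..h} (\<lambda>t. p * Qf \<alpha> s w t)"
    unfolding set_integrable_def using fin Qf_bounds[OF s]
    by (intro integrableI_bounded_set_indicator[where B="\<bar>p\<bar>"]) (auto simp: abs_mult mult_left_le)
  have "(LINT t:{-h..h}|lborel. 1 - p * Qf \<alpha> s w t) = (LINT t:{-h..h}|lborel. (1::real)) - (LINT t:{-h..h}|lborel. p * Qf \<alpha> s w t)"
    by (rule set_integral_diff(2)[OF i1 i2])
  also have "(LINT t:{-h..h}|lborel. (1::real)) = 2 * h"
    using h by (subst set_integral_const) auto
  also have "(LINT t:{-h..h}|lborel. p * Qf \<alpha> s w t) = p * (LINT t:{-h..h}|lborel. Qf \<alpha> s w t)"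
    by (rule set_integral_mult_right)
  finally show ?thesis using h unfolding cm_def by simp
qed

lemma prob_space_Hlaw:
  assumes fHm[measurable]: "fH \<in> borel_measurable borel"
    and fH0: "\<And>h. 0 \<le> fH h" and fHneg: "\<And>h. h \<le> 0 \<Longrightarrow> fH h = 0"
    and fHi: "integrable lborel (\<lambda>h. h * fH h)" and mean: "0 < mean_half_length fH"
  shows "prob_space (Hlaw fH)"
proof (rule prob_spaceI)
  have tf[measurable]: "tilde_fH fH \<in> borel_measurable borel"
    unfolding tilde_fH_def[abs_def] by measurable
  have tf0: "0 \<le> tilde_fH fH h" for h by (rule tilde_fH_nonneg[OF fH0 fHneg mean])
  have tfi: "integrable lborel (tilde_fH fH)"
    unfolding tilde_fH_def[abs_def] using fHi by simp
  have "emeasure (Hlaw fH) (space (Hlaw fH)) = emeasure (density lborel (\<lambda>h. ennreal (tilde_fH fH h))) {0<..}"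
    unfolding Hlaw_def by (subst emeasure_restrict_space) (auto simp: space_restrict_space)
  also have "\<dots> = (\<integral>\<^sup>+h. ennreal (tilde_fH fH h) * indicator {0<..} h \<partial>lborel)"
    by (subst emeasure_density) auto
  also have "\<dots> = (\<integral>\<^sup>+h. ennreal (tilde_fH fH h) \<partial>lborel)"
    using fHneg by (intro nn_integral_cong) (auto simp: tilde_fH_def split: split_indicator)
  also have "\<dots> = ennreal (\<integral>h. tilde_fH fH h \<partial>lborel)"
    using tf0 by (intro nn_integral_eq_integral tfi) auto
  also have "(\<integral>h. tilde_fH fH h \<partial>lborel) = 1"
    using mean unfolding tilde_fH_def[abs_def] by (simp add: mean_half_length_def)
  finally show "emeasure (Hlaw fH) (space (Hlaw fH)) = 1" by simp
qed

theorem proposition2: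
  fixes fH :: "real \<Rightarrow> real" and lam p \<alpha> s \<delta> :: real and m :: nat
  assumes "m \<in> {2, 4}"
    and "fH \<in> borel_measurable borel"
    and "\<And>h. 0 \<le> fH h"
    and "\<And>h. h \<le> 0 \<Longrightarrow> fH h = 0"
    and "integrable lborel fH"
    and "(\<integral>h. fH h \<partial>lborel) = 1"
    and "integrable lborel (\<lambda>h. h * fH h)"
    and "0 < mean_half_length fH"
    and "0 < lam"
    and "0 \<le> p" and "p \<le> 1"
    and "2 < \<alpha>"
    and "\<delta> = 2 / \<alpha>"
    and "0 < s"
  shows "laplace_interference m lam p fH \<alpha> s =
    (LINT h:{0<..}|lborel.
       (1 / (2 * h) * (LINT w:{-h..h}|lborel.
          exp (- lam * p * s powr (\<delta> / 2) *
            (LINT v:{(- w - h) * s powr (- \<delta> / 2)..(- w + h) * s powr (- \<delta> / 2)}|lborel.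
               1 / (1 + \<bar>v\<bar> powr (2 / \<delta>))))))
       * tilde_fH fH h) ^ (m div 2)"
proof -
  note fHm = assms(2) and fH0 = assms(3) and fHneg = assms(4) and fHi = assms(7) and mean = assms(8)
    and lam = assms(9) and p = assms(10,11) and \<alpha> = assms(12) and \<delta> = assms(13) and s = assms(14)
  define law where "law = typical_stick_law lam p fH"
  define L where "L = (LINT h:{0<..}|lborel. Phi \<alpha> s lam p h * tilde_fH fH h)"
  define I where "I = {..<m div 2}"
  have s0: "0 \<le> s" using s by simp
  have lam0: "0 \<le> lam" using lam by simp
  have H: "Hlaw fH \<in> space (prob_algebra Rpos)"
    using prob_space_Hlaw[OF fHm fH0 fHneg fHi mean] by (simp add: space_prob_algebra sets_Hlaw)
  have law_eq: "law = Hlaw fH \<bind> K2 lam p"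
    unfolding law_def by (rule typical_stick_law_eq)
  have prob_law: "prob_space law"
    unfolding law_eq by (rule prob_space_bind'[OF H K2_meas])
  have sets_law: "sets law = sets stick_space"
    unfolding law_eq by (rule sets_bind'[OF H K2_meas])
  interpret PS: product_prob_space "\<lambda>_::nat. law" I
    by (intro product_prob_spaceI prob_law)
  have SI[measurable]: "stick_interference \<alpha> \<in> borel_measurable law"
    by (subst measurable_cong_sets[OF sets_law refl]) measurable
  have Fl[measurable]: "(\<lambda>\<omega>. ennreal (exp (- s * stick_interference \<alpha> \<omega>))) \<in> borel_measurable law"
    by measurable
  have tf0: "0 \<le> tilde_fH fH h" for h
    by (rule tilde_fH_nonneg) (use fH0 fHneg mean in auto)
  have L0: "0 \<le> L"
    unfolding L_def set_lebesgue_integral_def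
    using Phi_bounds[OF _ p s0 lam0, of _ \<alpha>] tf0
    by (auto split: split_indicator intro!: integral_nonneg)
  have intF: "(\<integral>\<^sup>+\<omega>. ennreal (exp (- s * stick_interference \<alpha> \<omega>)) \<partial>law) = ennreal L"
    unfolding law_def L_def by (rule int_law[OF p s0 lam0 fHm fH0 fHneg fHi mean])
  have meas: "(\<lambda>\<omega>. exp (- s * interference_o m \<alpha> \<omega>)) \<in> borel_measurable (PiM I (\<lambda>_. law))"
    unfolding interference_o_def I_def[symmetric] by measurable
  have "laplace_interference m lam p fH \<alpha> s = (\<integral>\<omega>. exp (- s * interference_o m \<alpha> \<omega>) \<partial>PiM I (\<lambda>_. law))"
    unfolding laplace_interference_def typical_config_law_def law_def I_def ..
  also have "\<dots> = enn2real (\<integral>\<^sup>+\<omega>. ennreal (exp (- s * interference_o m \<alpha> \<omega>)) \<partial>PiM I (\<lambda>_. law))"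
    by (rule integral_eq_nn_integral[OF meas]) simp
  also have "(\<integral>\<^sup>+\<omega>. ennreal (exp (- s * interference_o m \<alpha> \<omega>)) \<partial>PiM I (\<lambda>_. law)) =
      (\<integral>\<^sup>+\<omega>. (\<Prod>k\<in>I. ennreal (exp (- s * stick_interference \<alpha> (\<omega> k)))) \<partial>PiM I (\<lambda>_. law))"
    by (intro nn_integral_cong)
       (simp add: interference_o_def I_def sum_distrib_left exp_sum prod_ennreal)
  also have "\<dots> = (\<Prod>k\<in>I. \<integral>\<^sup>+\<omega>. ennreal (exp (- s * stick_interference \<alpha> \<omega>)) \<partial>law)"
    by (rule PS.product_nn_integral_prod) (auto simp: I_def)
  also have "\<dots> = ennreal (L ^ (m div 2))"
    unfolding intF using L0 by (simp add: I_def ennreal_power prod_constant)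
  also have "enn2real (ennreal (L ^ (m div 2))) = L ^ (m div 2)"
    using L0 by simp
  also have "L = (LINT h:{0<..}|lborel.
       (1 / (2 * h) * (LINT w:{-h..h}|lborel.
          exp (- lam * p * s powr (\<delta> / 2) *
            (LINT v:{(- w - h) * s powr (- \<delta> / 2)..(- w + h) * s powr (- \<delta> / 2)}|lborel.
               1 / (1 + \<bar>v\<bar> powr (2 / \<delta>))))))
       * tilde_fH fH h)"
    unfolding L_def
  proof (rule set_lebesgue_integral_cong[OF _ allI[OF impI]])
    show "{0::real<..} \<in> sets lborel" by simp
    fix h :: real assume "h \<in> {0<..}"
    then have h: "0 < h" by simp
    have ew: "Ew \<alpha> s lam p h w = exp (- lam * p * s powr (\<delta> / 2) *
            (LINT v:{(- w - h) * s powr (- \<delta> / 2)..(- w + h) * s powr (- \<delta> / 2)}|lborel.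
               1 / (1 + \<bar>v\<bar> powr (2 / \<delta>))))" for w
    proof -
      have "2 * h * lam * cm \<alpha> s p h w - 2 * h * lam = lam * (2 * h * cm \<alpha> s p h w) - 2 * h * lam"
        by (simp add: algebra_simps)
      also have "\<dots> = - lam * p * (LINT t:{-h..h}|lborel. Qf \<alpha> s w t)"
        unfolding cm_eq[OF h s0] by (simp add: algebra_simps)
      finally show ?thesis
        unfolding Ew_def Q_substitution[OF \<alpha> \<delta> s h] by (simp add: mult.assoc)
    qed
    have eqf: "Ew \<alpha> s lam p h = (\<lambda>w. exp (- lam * p * s powr (\<delta> / 2) *
            (LINT v:{(- w - h) * s powr (- \<delta> / 2)..(- w + h) * s powr (- \<delta> / 2)}|lborel.
               1 / (1 + \<bar>v\<bar> powr (2 / \<delta>)))))"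
      by (rule ext, rule ew)
    show "Phi \<alpha> s lam p h * tilde_fH fH h =
      1 / (2 * h) * (LINT w:{-h..h}|lborel.
          exp (- lam * p * s powr (\<delta> / 2) *
            (LINT v:{(- w - h) * s powr (- \<delta> / 2)..(- w + h) * s powr (- \<delta> / 2)}|lborel.
               1 / (1 + \<bar>v\<bar> powr (2 / \<delta>))))) * tilde_fH fH h"
      unfolding Phi_def eqf by simp
  qed
  finally show ?thesis .
qed

end
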